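(* The norm $\|\cdot\|_X$ is tight (i.e. every vector of $V$ is tight) if and only if every proper nonempty face $F$ of the unit ball $B_X$ contains a unitangent vector $u$ that is perpendicular to $F$, i.e. $\langle u,v-w\rangle=0$ for all $v,w\in F$.
   Context: $V$ is a finite dimensional real vector space with a positive definite symmetric bilinear form $\langle\cdot,\cdot\rangle$, $\|v\|_2=\sqrt{\langle v,v\rangle}$; $\|\cdot\|_X$ is a norm with unit ball $B_X$ and dual norm $\|v\|_Y=\max\{\langle v,w\rangle:\|w\|_X=1\}$. A face of $B_X$ is a closed convex subset $F\subseteq B_X$ such that $u,w\in B_X$, $0<t<1$, $tu+(1-t)w\in F$ imply $u,w\in F$. A vector $u$ is unitangent if $\|u\|_2^2=\|u\|_X\|u\|_Y$. For norms $\|\cdot\|_P,\|\cdot\|_Q$ (among $X,Y,2$), $c=a+b$ is a $PQ$-decomposition if for every decomposition $c=a'+b'$: $\|a'\|_P>\|a\|_P$, or $\|b'\|_Q>\|b\|_Q$, or $(\|a'\|_P,\|b'\|_Q)=(\|a\|_P,\|b\|_Q)$. A vector is tight if every $X2$-decomposition of it is an $XY$-decomposition. *)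

theory Defs
  imports "HOL-Analysis.Analysis"
begin

text \<open>V is modelled as a euclidean_space type; the positive definite form is the inner product.
  A norm X is a real function N on V satisfying the norm axioms.\<close>

definition is_norm :: "('a::euclidean_space \<Rightarrow> real) \<Rightarrow> bool" where
  "is_norm N \<longleftrightarrow> (\<forall>x. N x \<ge> 0) \<and> (\<forall>x. N x = 0 \<longleftrightarrow> x = 0)
     \<and> (\<forall>c x. N (c *\<^sub>R x) = \<bar>c\<bar> * N x) \<and> (\<forall>x y. N (x + y) \<le> N x + N y)"

definition dual_norm :: "('a::euclidean_space \<Rightarrow> real) \<Rightarrow> 'a \<Rightarrow> real" where
  "dual_norm N v = Sup {inner v w | w. N w = 1}"

definition unit_ball_of :: "('a::euclidean_space \<Rightarrow> real) \<Rightarrow> 'a set" where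
  "unit_ball_of N = {x. N x \<le> 1}"

definition is_face :: "('a::euclidean_space \<Rightarrow> real) \<Rightarrow> 'a set \<Rightarrow> bool" where
  "is_face N F \<longleftrightarrow> closed F \<and> convex F \<and> F \<subseteq> unit_ball_of N \<and>
     (\<forall>u \<in> unit_ball_of N. \<forall>w \<in> unit_ball_of N. \<forall>t::real. 0 < t \<and> t < 1 \<and>
        t *\<^sub>R u + (1 - t) *\<^sub>R w \<in> F \<longrightarrow> u \<in> F \<and> w \<in> F)"

definition unitangent :: "('a::euclidean_space \<Rightarrow> real) \<Rightarrow> 'a \<Rightarrow> bool" where
  "unitangent N u \<longleftrightarrow> (norm u)\<^sup>2 = N u * dual_norm N u"

definition is_decomp :: "('a::euclidean_space \<Rightarrow> real) \<Rightarrow> ('a \<Rightarrow> real) \<Rightarrow> 'a \<Rightarrow> 'a \<Rightarrow> 'a \<Rightarrow> bool" where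
  "is_decomp P Q c a b \<longleftrightarrow> c = a + b \<and>
     (\<forall>a' b'. c = a' + b' \<longrightarrow> P a' > P a \<or> Q b' > Q b \<or> (P a' = P a \<and> Q b' = Q b))"

text \<open>A vector is tight if every X2-decomposition of it is an XY-decomposition.\<close>
definition tight :: "('a::euclidean_space \<Rightarrow> real) \<Rightarrow> 'a \<Rightarrow> bool" where
  "tight N c \<longleftrightarrow> (\<forall>a b. is_decomp N norm c a b \<longrightarrow> is_decomp N (dual_norm N) c a b)"

end

theory Submission
  imports Defs
begin

lemma real_le_small:
  fixes A C :: real
  assumes "\<And>t. 0 < t \<Longrightarrow> t \<le> 1 \<Longrightarrow> A \<le> t * C" "C \<ge> 0"
  shows "A \<le> 0"
proof (rule ccontr)
  assume "\<not> A \<le> 0"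
  hence A: "A > 0" by simp
  define t where "t = min 1 (A / (2 * (C + 1)))"
  have t0: "0 < t" "t \<le> 1" using A assms(2) by (auto simp: t_def)
  have "t * C \<le> (A / (2 * (C + 1))) * C"
    using assms(2) t0 by (intro mult_right_mono) (auto simp: t_def)
  also have "\<dots> < A"
  proof -
    have "(A / (2 * (C + 1))) * C = A * (C / (2 * (C+1)))" by simp
    also have "\<dots> < A * 1"
      using A assms(2) by (intro mult_strict_left_mono) (auto simp: field_simps)
    finally show ?thesis by simp
  qed
  finally show False using assms(1)[OF t0] by simp
qed

lemma gap_lemma:
  fixes f :: "'a::metric_space \<Rightarrow> real"
  assumes K: "compact K" and f: "continuous_on K f" and eta: "\<eta> > 0"
  shows "\<exists>\<tau>>0. \<forall>y\<in>K. f y < \<tau> \<longrightarrow> infdist y {y\<in>K. f y \<le> 0} < \<eta>"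
proof -
  define Z where "Z = {y\<in>K. f y \<le> 0}"
  define K' where "K' = K \<inter> {y. \<eta> \<le> infdist y Z}"
  have "closed {y. \<eta> \<le> infdist y Z}"
    by (intro closed_Collect_le continuous_on_const continuous_on_infdist continuous_on_id)
  hence cK': "compact K'" unfolding K'_def using K by (simp add: compact_Int_closed)
  show ?thesis
  proof (cases "K' = {}")
    case True
    thus ?thesis by (intro exI[of _ 1]) (auto simp: K'_def Z_def)
  next
    case False
    have "continuous_on K' f" using f by (rule continuous_on_subset) (auto simp: K'_def)
    then obtain y0 where y0: "y0 \<in> K'" "\<And>y. y \<in> K' \<Longrightarrow> f y0 \<le> f y"
      using continuous_attains_inf[OF cK' False] by blast
    have "f y0 > 0"
    proof (rule ccontr)
      assume "\<not> f y0 > 0"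
      hence "y0 \<in> Z" using y0 by (auto simp: Z_def K'_def)
      hence "infdist y0 Z = 0" by simp
      thus False using y0 eta by (auto simp: K'_def)
    qed
    moreover have "\<forall>y\<in>K. f y < f y0 \<longrightarrow> infdist y Z < \<eta>"
      using y0 by (force simp: K'_def)
    ultimately show ?thesis unfolding Z_def by blast
  qed
qed

lemma kkt_lemma:
  fixes c z x :: "'a::real_inner"
  assumes K: "convex K" and x: "x \<in> K" and e: "\<epsilon> \<ge> 0"
    and mx: "\<And>y. y \<in> K \<Longrightarrow> c \<bullet> y - \<epsilon> * (norm (y - z))\<^sup>2 \<le> c \<bullet> x - \<epsilon> * (norm (x - z))\<^sup>2"
    and y: "y \<in> K"
  shows "(c - (2*\<epsilon>) *\<^sub>R (x - z)) \<bullet> y \<le> (c - (2*\<epsilon>) *\<^sub>R (x - z)) \<bullet> x"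
proof -
  define v where "v = y - x"
  have "(c - (2*\<epsilon>) *\<^sub>R (x - z)) \<bullet> v \<le> 0"
  proof (rule real_le_small[where C = "\<epsilon> * (norm v)\<^sup>2"])
    fix t :: real assume t: "0 < t" "t \<le> 1"
    have "x + t *\<^sub>R v = (1 - t) *\<^sub>R x + t *\<^sub>R y" by (simp add: v_def algebra_simps)
    hence xt: "x + t *\<^sub>R v \<in> K" using K x y t by (simp add: convex_def)
    have "(norm (x + t *\<^sub>R v - z))\<^sup>2 = (norm (x - z))\<^sup>2 + 2 * t * ((x - z) \<bullet> v) + t\<^sup>2 * (norm v)\<^sup>2"
    proof -
      have eq: "x + t *\<^sub>R v - z = (x - z) + t *\<^sub>R v" by simp
      have "(norm (x + t *\<^sub>R v - z))\<^sup>2 = ((x - z) + t *\<^sub>R v) \<bullet> ((x - z) + t *\<^sub>R v)"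
        unfolding eq by (rule power2_norm_eq_inner)
      also have "\<dots> = (x - z) \<bullet> (x - z) + 2 * t * ((x - z) \<bullet> v) + t\<^sup>2 * (v \<bullet> v)"
        by (simp add: inner_add_left inner_add_right inner_commute power2_eq_square algebra_simps)
      finally show ?thesis by (simp add: power2_norm_eq_inner)
    qed
    with mx[OF xt] have "t * (c \<bullet> v) - \<epsilon> * (2 * t * ((x - z) \<bullet> v) + t\<^sup>2 * (norm v)\<^sup>2) \<le> 0"
      by (simp add: inner_add_right algebra_simps)
    hence "t * ((c - (2*\<epsilon>) *\<^sub>R (x - z)) \<bullet> v) \<le> t * (t * (\<epsilon> * (norm v)\<^sup>2))"
      by (simp add: inner_diff_left algebra_simps power2_eq_square)
    thus "(c - (2*\<epsilon>) *\<^sub>R (x - z)) \<bullet> v \<le> t * (\<epsilon> * (norm v)\<^sup>2)"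
      using t by simp
  qed (use e in simp)
  thus ?thesis by (simp add: v_def inner_diff_right)
qed

lemma frac_lt:
  fixes \<tau> X c :: real
  assumes "0 < \<tau>" "0 \<le> X" "1 \<le> c"
  shows "\<tau> / (c * (X + 1)) * X < \<tau>"
proof -
  have pos: "c * (X + 1) > 0" using assms by (intro mult_pos_pos) auto
  have "1 * (X + 1) \<le> c * (X + 1)" using assms by (intro mult_right_mono) auto
  hence "X < c * (X + 1)" by simp
  hence "X / (c * (X + 1)) < 1" using pos by (simp add: divide_less_eq)
  hence "\<tau> * (X / (c * (X + 1))) < \<tau> * 1" using assms(1) by (intro mult_strict_left_mono) auto
  thus ?thesis by simp
qed

lemma norm_add_sq:
  fixes x y :: "'a::real_inner"
  shows "(norm (x + y))\<^sup>2 = (norm x)\<^sup>2 + 2 * (x \<bullet> y) + (norm y)\<^sup>2"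
  unfolding power2_norm_eq_inner by (simp add: inner_add_left inner_add_right inner_commute[of y x])

lemma lift_lemma:
  fixes z b0 d :: "'a::euclidean_space"
  assumes K: "compact K" "convex K" and z: "z \<in> K"
    and zb0: "\<And>y. y \<in> K \<Longrightarrow> b0 \<bullet> y \<le> b0 \<bullet> z"
    and zd: "\<And>y. y \<in> K \<Longrightarrow> b0 \<bullet> y = b0 \<bullet> z \<Longrightarrow> d \<bullet> y \<le> d \<bullet> z"
    and dl: "\<delta> > 0"
  shows "\<exists>b z'. z' \<in> K \<and> (\<forall>y\<in>K. b \<bullet> y \<le> b \<bullet> z') \<and> dist z' z < \<delta> \<and>
     (\<forall>g\<in>K. b \<bullet> g = b \<bullet> z' \<longrightarrow> infdist g {e\<in>K. b0 \<bullet> e = b0 \<bullet> z \<and> d \<bullet> e = d \<bullet> z} < \<delta>)"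
proof -
  define \<beta> where "\<beta> y = b0 \<bullet> z - b0 \<bullet> y" for y
  have \<beta>0: "\<beta> y \<ge> 0" if "y \<in> K" for y using zb0[OF that] by (simp add: \<beta>_def)
  obtain M0 where M0: "\<And>y. y \<in> K \<Longrightarrow> norm y \<le> M0"
    using compact_imp_bounded[OF K(1)] by (auto simp: bounded_iff)
  define M where "M = max M0 0"
  have M: "\<And>y. y \<in> K \<Longrightarrow> norm y \<le> M" "M \<ge> 0" using M0 by (auto simp: M_def intro: order_trans[OF _ max.cobounded1])
  have dK: "norm (y - y') \<le> 2 * M" if "y \<in> K" "y' \<in> K" for y y'
    using norm_triangle_ineq4[of y y'] M(1)[OF that(1)] M(1)[OF that(2)] by simp
  define Z2 where "Z2 = {e\<in>K. b0 \<bullet> e = b0 \<bullet> z \<and> d \<bullet> e = d \<bullet> z}"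
  define f2 where "f2 y = \<beta> y + max 0 (d \<bullet> z - d \<bullet> y)" for y
  have cf2: "continuous_on K f2" unfolding f2_def \<beta>_def by (intro continuous_intros)
  have Zf2: "{y\<in>K. f2 y \<le> 0} = Z2"
  proof safe
    fix y assume y: "y \<in> K" "f2 y \<le> 0"
    have "\<beta> y = 0" "d \<bullet> z \<le> d \<bullet> y" using y \<beta>0[OF y(1)] by (auto simp: f2_def)
    moreover hence "d \<bullet> y \<le> d \<bullet> z" using zd[OF y(1)] by (simp add: \<beta>_def)
    ultimately show "y \<in> Z2" using y by (auto simp: Z2_def \<beta>_def)
  qed (auto simp: Z2_def f2_def \<beta>_def)
  obtain \<tau>2 where t2: "\<tau>2 > 0" "\<And>y. y \<in> K \<Longrightarrow> f2 y < \<tau>2 \<Longrightarrow> infdist y Z2 < \<delta>"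
    using gap_lemma[OF K(1) cf2 dl] unfolding Zf2 by blast
  define \<eta>1 where "\<eta>1 = min \<delta> (\<tau>2 / (8 * M + 1))"
  have e1: "\<eta>1 > 0" using dl t2 M by (simp add: \<eta>1_def)
  define f1 where "f1 y = \<beta> y + max 0 ((norm (y - z))\<^sup>2 - d \<bullet> (y - z))" for y
  have cf1: "continuous_on K f1" unfolding f1_def \<beta>_def by (intro continuous_intros)
  have Zf1: "{y\<in>K. f1 y \<le> 0} = {z}"
  proof safe
    fix y assume y: "y \<in> K" "f1 y \<le> 0"
    have "\<beta> y = 0" "(norm (y - z))\<^sup>2 \<le> d \<bullet> (y - z)" using y \<beta>0[OF y(1)] by (auto simp: f1_def)
    moreover hence "d \<bullet> y \<le> d \<bullet> z" using zd[OF y(1)] by (simp add: \<beta>_def)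
    ultimately have "(norm (y - z))\<^sup>2 \<le> 0" unfolding inner_diff_right by linarith
    thus "y = z" by simp
  qed (auto simp: f1_def \<beta>_def z)
  obtain \<tau>1 where t1: "\<tau>1 > 0" "\<And>y. y \<in> K \<Longrightarrow> f1 y < \<tau>1 \<Longrightarrow> dist y z < \<eta>1"
    using gap_lemma[OF K(1) cf1 e1] unfolding Zf1 by auto
  define \<epsilon> where "\<epsilon> = min (\<tau>1 / (2 * (2 * M * norm d + 1))) (\<tau>2 / (4 * (2 * M * (norm d + 4 * M) + 1)))"
  have p1: "0 < \<tau>1 / (2 * (2 * M * norm d + 1))" using t1(1) M(2) by (intro divide_pos_pos) (auto intro!: add_nonneg_pos)
  have p2: "0 < \<tau>2 / (4 * (2 * M * (norm d + 4 * M) + 1))" using t2(1) M(2) by (intro divide_pos_pos) (auto intro!: add_nonneg_pos)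
  have ep: "\<epsilon> > 0" unfolding \<epsilon>_def using p1 p2 by simp
  have ep1: "\<epsilon> * (2 * M * norm d) < \<tau>1"
  proof -
    have "\<epsilon> * (2 * M * norm d) \<le> (\<tau>1 / (2 * (2 * M * norm d + 1))) * (2 * M * norm d)"
      using M by (intro mult_right_mono) (auto simp: \<epsilon>_def)
    also have "\<dots> < \<tau>1" using frac_lt[OF t1(1), of "2 * M * norm d" 2] M by simp
    finally show ?thesis .
  qed
  have ep2: "\<epsilon> * (2 * M * (norm d + 4 * M)) < \<tau>2 / 2"
  proof -
    have "\<epsilon> * (2 * M * (norm d + 4 * M)) \<le> (\<tau>2 / (4 * (2 * M * (norm d + 4 * M) + 1))) * (2 * M * (norm d + 4 * M))"
      using M by (intro mult_right_mono) (auto simp: \<epsilon>_def)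
    also have "\<dots> \<le> \<tau>2 / 4"
    proof -
      have "(\<tau>2 / (4 * (2 * M * (norm d + 4 * M) + 1))) * (2 * M * (norm d + 4 * M)) = (\<tau>2/4) / (1 * (2 * M * (norm d + 4 * M) + 1)) * (2 * M * (norm d + 4 * M))"
        by simp
      also have "\<dots> < \<tau>2/4" using frac_lt[of "\<tau>2/4" "2 * M * (norm d + 4 * M)" 1] t2(1) M by simp
      finally show ?thesis by simp
    qed
    also have "\<dots> < \<tau>2 / 2" using t2 by simp
    finally show ?thesis .
  qed
  define \<psi> where "\<psi> y = (b0 + \<epsilon> *\<^sub>R d) \<bullet> y - \<epsilon> * (norm (y - z))\<^sup>2" for y
  have cpsi: "continuous_on K \<psi>" unfolding \<psi>_def by (intro continuous_intros)
  obtain ze where ze: "ze \<in> K" "\<And>y. y \<in> K \<Longrightarrow> \<psi> y \<le> \<psi> ze"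
    using continuous_attains_sup[OF K(1) _ cpsi] z by blast
  have "\<psi> z \<le> \<psi> ze" using ze z by blast
  hence A: "(b0 \<bullet> ze - b0 \<bullet> z) + \<epsilon> * (d \<bullet> (ze - z) - (norm (ze - z))\<^sup>2) \<ge> 0"
    by (simp add: \<psi>_def inner_add_left inner_diff_right algebra_simps)
  have bz: "b0 \<bullet> ze - b0 \<bullet> z \<le> 0" using zb0[OF ze(1)] by simp
  have q1: "d \<bullet> (ze - z) - (norm (ze - z))\<^sup>2 \<ge> 0"
  proof -
    have "\<epsilon> * (d \<bullet> (ze - z) - (norm (ze - z))\<^sup>2) \<ge> 0" using A bz by linarith
    thus ?thesis using ep by (simp add: zero_le_mult_iff)
  qed
  have "\<beta> ze \<le> \<epsilon> * (d \<bullet> (ze - z) - (norm (ze - z))\<^sup>2)" using A by (simp add: \<beta>_def)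
  also have "\<dots> \<le> \<epsilon> * (d \<bullet> (ze - z))" using ep by (simp add: mult_left_mono)
  also have "\<dots> \<le> \<epsilon> * (norm d * norm (ze - z))"
    using ep by (intro mult_left_mono) (auto intro: order_trans[OF _ norm_cauchy_schwarz])
  also have "\<dots> \<le> \<epsilon> * (2 * M * norm d)"
  proof -
    have "norm d * norm (ze - z) \<le> norm d * (2 * M)" using dK[OF ze(1) z] by (intro mult_left_mono) auto
    thus ?thesis using ep by (intro mult_left_mono) (auto simp: algebra_simps)
  qed
  finally have "f1 ze < \<tau>1" using ep1 q1 by (simp add: f1_def)
  hence dze: "dist ze z < \<eta>1" using t1 ze by blast
  define b where "b = (b0 + \<epsilon> *\<^sub>R d) - (2*\<epsilon>) *\<^sub>R (ze - z)"
  have bmax: "b \<bullet> y \<le> b \<bullet> ze" if "y \<in> K" for y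
    unfolding b_def
    by (rule kkt_lemma[OF K(2) ze(1)]) (use ep ze that in \<open>auto simp: \<psi>_def\<close>)
  have "infdist g Z2 < \<delta>" if g: "g \<in> K" "b \<bullet> g = b \<bullet> ze" for g
  proof -
    define q where "q = (d - 2 *\<^sub>R (ze - z)) \<bullet> (g - z)"
    have "b \<bullet> z \<le> b \<bullet> g" using bmax[OF z] g by simp
    hence B: "b0 \<bullet> (g - z) + \<epsilon> * q \<ge> 0"
      by (simp add: b_def q_def inner_diff_left inner_diff_right inner_add_left algebra_simps)
    hence bq: "\<beta> g \<le> \<epsilon> * q" by (simp add: \<beta>_def inner_diff_right)
    have q0: "q \<ge> 0"
    proof -
      have "0 \<le> \<epsilon> * q" using bq \<beta>0[OF g(1)] by linarith
      thus ?thesis using ep by (simp add: zero_le_mult_iff)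
    qed
    have ngz: "norm (g - z) \<le> 2 * M" using dK[OF g(1) z] .
    have nze: "norm (ze - z) \<le> 2 * M" using dK[OF ze(1) z] .
    have "q \<le> norm (d - 2 *\<^sub>R (ze - z)) * norm (g - z)" unfolding q_def by (rule norm_cauchy_schwarz)
    also have "\<dots> \<le> (norm d + 4 * M) * (2 * M)"
    proof (rule mult_mono)
      have "norm (d - 2 *\<^sub>R (ze - z)) \<le> norm d + norm (2 *\<^sub>R (ze - z))" by (rule norm_triangle_ineq4)
      thus "norm (d - 2 *\<^sub>R (ze - z)) \<le> norm d + 4 * M" using nze by simp
    qed (use ngz M in auto)
    finally have "q \<le> 2 * M * (norm d + 4 * M)" by (simp add: algebra_simps)
    hence q2: "\<epsilon> * q \<le> \<epsilon> * (2 * M * (norm d + 4 * M))" using ep by (intro mult_left_mono) auto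
    have "d \<bullet> z - d \<bullet> g \<le> 2 * ((z - ze) \<bullet> (g - z))"
      using q0 by (simp add: q_def inner_diff_left inner_diff_right algebra_simps)
    also have "\<dots> \<le> 2 * (norm (ze - z) * norm (g - z))"
      using norm_cauchy_schwarz[of "z - ze" "g - z"] by (simp add: norm_minus_commute)
    also have "\<dots> \<le> 2 * (\<eta>1 * (2 * M))"
      using dze ngz M e1 by (intro mult_left_mono mult_mono) (auto simp: dist_norm)
    also have "\<dots> \<le> \<tau>2 / 2"
    proof -
      have "\<eta>1 * (4 * M) \<le> (\<tau>2 / (8 * M + 1)) * (4 * M)"
        using M by (intro mult_right_mono) (auto simp: \<eta>1_def)
      also have "\<dots> \<le> \<tau>2 / 2"
      proof -
        have "(\<tau>2 / (8 * M + 1)) * (4 * M) = (\<tau>2 / 2) * ((8 * M) / (8 * M + 1))" using M by (simp add: field_simps)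
        also have "\<dots> \<le> (\<tau>2 / 2) * 1" using t2 M by (intro mult_left_mono) auto
        finally show ?thesis by simp
      qed
      finally show ?thesis by simp
    qed
    finally have h: "d \<bullet> z - d \<bullet> g \<le> \<tau>2 / 2" .
    have "\<beta> g < \<tau>2 / 2" using bq q2 ep2 by linarith
    hence "f2 g < \<tau>2" using h t2(1) unfolding f2_def by (cases "0 \<le> d \<bullet> z - d \<bullet> g") (auto simp: max_def)
    thus ?thesis using t2 g by blast
  qed
  moreover have "dist ze z < \<delta>" using dze by (simp add: \<eta>1_def)
  ultimately show ?thesis using ze(1) bmax unfolding Z2_def by blast
qed

lemma infdist_lessE:
  assumes "infdist x A < r" "A \<noteq> {}"
  obtains a where "a \<in> A" "dist x a < r"
proof -
  have "(INF a\<in>A. dist x a) < r" using assms by (simp add: infdist_notempty)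
  then obtain a where "a \<in> A" "dist x a < r" using cInf_lessD[of "(\<lambda>a. dist x a) ` A" r] assms(2) by auto
  thus ?thesis using that by blast
qed

lemma lex_lemma:
  fixes K :: "'a::euclidean_space set"
  assumes "compact K" "convex K" "F face_of K" "u \<in> F" "\<delta> > 0"
  shows "\<exists>b z. z \<in> K \<and> (\<forall>y\<in>K. b \<bullet> y \<le> b \<bullet> z) \<and> dist z u < \<delta> \<and>
           (\<forall>g\<in>K. b \<bullet> g = b \<bullet> z \<longrightarrow> infdist g F < \<delta>)"
  using assms
proof (induction "nat (aff_dim K + 1)" arbitrary: K F u \<delta> rule: less_induct)
  case less
  note K = less.prems(1,2) and FK = less.prems(3) and uF = less.prems(4) and dl = less.prems(5)
  have FsK: "F \<subseteq> K" using face_of_imp_subset[OF FK] .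
  show ?case
  proof (cases "F = K")
    case True
    show ?thesis
      by (rule exI[of _ 0], rule exI[of _ u]) (use True uF dl in auto)
  next
    case False
    have cF: "convex F" using face_of_imp_convex[OF FK] .
    obtain x where x: "x \<in> rel_interior F" using rel_interior_eq_empty[OF cF] uF by blast
    have xF: "x \<in> F" using x rel_interior_subset by blast
    have xK: "x \<in> K" "x \<notin> rel_interior K" using face_of_subset_rel_boundary[OF FK False] xF by auto
    obtain a where a: "a \<noteq> 0" "\<And>y. y \<in> K \<Longrightarrow> a \<bullet> x \<le> a \<bullet> y" "\<And>y. y \<in> rel_interior K \<Longrightarrow> a \<bullet> x < a \<bullet> y"
      using supporting_hyperplane_rel_boundary[OF K(2) xK] by blast
    define E where "E = K \<inter> {y. a \<bullet> y = a \<bullet> x}"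
    have EK: "E face_of K" unfolding E_def
      by (rule face_of_Int_supporting_hyperplane_ge[OF K(2)]) (use a in auto)
    have "K \<noteq> {}" using xK by auto
    then obtain y0 where "y0 \<in> rel_interior K" using rel_interior_eq_empty[OF K(2)] by blast
    hence "y0 \<in> K" "y0 \<notin> E" using a(3)[of y0] rel_interior_subset by (auto simp: E_def)
    hence EneK: "E \<noteq> K" by blast
    have FE: "F \<subseteq> E" by (rule subset_of_face_of[OF EK FsK]) (use x xF xK in \<open>auto simp: E_def\<close>)
    have FfE: "F face_of E" by (rule face_of_subset[OF FK FE face_of_imp_subset[OF EK]])
    have ad: "aff_dim E < aff_dim K" using face_of_aff_dim_lt[OF K(2) EK EneK] .
    have "aff_dim E \<ge> -1" using aff_dim_geq by blast
    hence lt: "nat (aff_dim E + 1) < nat (aff_dim K + 1)" using ad by auto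
    have cE: "compact E" "convex E" using face_of_imp_compact[OF K(2) K(1) EK] face_of_imp_convex[OF EK] by auto
    obtain d z where dz: "z \<in> E" "\<And>y. y \<in> E \<Longrightarrow> d \<bullet> y \<le> d \<bullet> z" "dist z u < \<delta>/2"
      "\<And>g. g \<in> E \<Longrightarrow> d \<bullet> g = d \<bullet> z \<Longrightarrow> infdist g F < \<delta>/2"
      using less.hyps[OF lt cE FfE uF] dl by (metis half_gt_zero)
    have zK: "z \<in> K" "a \<bullet> z = a \<bullet> x" using dz(1) by (auto simp: E_def)
    have "\<exists>b z'. z' \<in> K \<and> (\<forall>y\<in>K. b \<bullet> y \<le> b \<bullet> z') \<and> dist z' z < \<delta>/2 \<and>
     (\<forall>g\<in>K. b \<bullet> g = b \<bullet> z' \<longrightarrow> infdist g {e\<in>K. (-a) \<bullet> e = (-a) \<bullet> z \<and> d \<bullet> e = d \<bullet> z} < \<delta>/2)"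
    proof (rule lift_lemma[OF K zK(1)])
      fix y assume "y \<in> K" thus "(-a) \<bullet> y \<le> (-a) \<bullet> z" using a(2) zK by simp
    next
      fix y assume "y \<in> K" "(-a) \<bullet> y = (-a) \<bullet> z"
      thus "d \<bullet> y \<le> d \<bullet> z" using dz(2) zK by (simp add: E_def)
    qed (use dl in simp)
    then obtain b z' where bz: "z' \<in> K" "\<forall>y\<in>K. b \<bullet> y \<le> b \<bullet> z'" "dist z' z < \<delta>/2"
      "\<And>g. g \<in> K \<Longrightarrow> b \<bullet> g = b \<bullet> z' \<Longrightarrow> infdist g {e\<in>K. (-a) \<bullet> e = (-a) \<bullet> z \<and> d \<bullet> e = d \<bullet> z} < \<delta>/2"
      by blast
    have "infdist g F < \<delta>" if g: "g \<in> K" "b \<bullet> g = b \<bullet> z'" for g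
    proof -
      have ne: "{e\<in>K. (-a) \<bullet> e = (-a) \<bullet> z \<and> d \<bullet> e = d \<bullet> z} \<noteq> {}" using zK by auto
      obtain e where e: "e \<in> K" "(-a) \<bullet> e = (-a) \<bullet> z" "d \<bullet> e = d \<bullet> z" "dist g e < \<delta>/2"
        using infdist_lessE[OF bz(4)[OF g] ne] by blast
      have "e \<in> E" using e zK by (simp add: E_def)
      hence "infdist e F < \<delta>/2" using dz(4) e by blast
      moreover have "infdist g F \<le> infdist e F + dist g e" by (rule infdist_triangle)
      ultimately show ?thesis using e by linarith
    qed
    moreover have "dist z' u < \<delta>" using bz(3) dz(3) dist_triangle[of z' u z] by linarith
    ultimately show ?thesis using bz(1,2) by blast
  qed
qed

context
  fixes N :: "'a::euclidean_space \<Rightarrow> real"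
  assumes nN: "is_norm N"
begin

lemma N_nonneg: "N x \<ge> 0" using nN by (simp add: is_norm_def)
lemma N_eq0: "N x = 0 \<longleftrightarrow> x = 0" using nN by (simp add: is_norm_def)
lemma N_scale: "N (c *\<^sub>R x) = \<bar>c\<bar> * N x" using nN by (simp add: is_norm_def)
lemma N_tri: "N (x + y) \<le> N x + N y" using nN by (simp add: is_norm_def)
lemma N_0 [simp]: "N 0 = 0" using N_eq0 by simp
lemma N_pos: "x \<noteq> 0 \<Longrightarrow> N x > 0" using N_nonneg[of x] N_eq0[of x] by linarith
lemma N_minus: "N (- x) = N x" using N_scale[of "-1" x] by simp

lemma N_convex_comb: "0 \<le> t \<Longrightarrow> t \<le> 1 \<Longrightarrow> N ((1 - t) *\<^sub>R x + t *\<^sub>R y) \<le> (1 - t) * N x + t * N y"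
  using N_tri[of "(1 - t) *\<^sub>R x" "t *\<^sub>R y"] by (simp add: N_scale)

lemma N_convex: "convex_on UNIV N"
  by (rule convex_onI) (auto intro: N_convex_comb)

lemma N_cont: "continuous_on UNIV N"
  by (rule convex_on_continuous[OF open_UNIV N_convex])

lemma N_lower: "\<exists>m>0. \<forall>x. m * norm x \<le> N x"
proof -
  have sne: "sphere (0::'a) 1 \<noteq> {}"
  proof -
    obtain e :: 'a where "e \<in> Basis" using nonempty_Basis by blast
    hence "e \<in> sphere 0 1" by simp
    thus ?thesis by blast
  qed
  obtain x0 where x0: "x0 \<in> sphere 0 1" "\<And>y. y \<in> sphere 0 1 \<Longrightarrow> N x0 \<le> N y"
    using continuous_attains_inf[OF compact_sphere sne continuous_on_subset[OF N_cont]] by blast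
  have m: "N x0 > 0" using x0(1) by (intro N_pos) auto
  have "N x0 * norm x \<le> N x" for x
  proof (cases "x = 0")
    case False
    hence "(1 / norm x) *\<^sub>R x \<in> sphere 0 1" by simp
    hence "N x0 \<le> N ((1 / norm x) *\<^sub>R x)" by (rule x0(2))
    also have "\<dots> = N x / norm x" by (simp add: N_scale)
    finally show ?thesis using False by (simp add: field_simps)
  qed simp
  thus ?thesis using m by blast
qed

lemma B_closed: "closed (unit_ball_of N)"
  unfolding unit_ball_of_def
  by (intro closed_Collect_le continuous_on_const N_cont)

lemma B_bounded: "bounded (unit_ball_of N)"
proof -
  obtain m where m: "m > 0" "\<And>x. m * norm x \<le> N x" using N_lower by blast
  have "norm x \<le> 1 / m" if "x \<in> unit_ball_of N" for x
    using m(2)[of x] that m(1) by (simp add: unit_ball_of_def field_simps)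
  thus ?thesis by (auto simp: bounded_iff)
qed

lemma B_compact: "compact (unit_ball_of N)"
  using B_closed B_bounded by (simp add: compact_eq_bounded_closed)

lemma B_convex: "convex (unit_ball_of N)"
  unfolding convex_def unit_ball_of_def
proof safe
  fix x y :: 'a and u v :: real
  assume "N x \<le> 1" "N y \<le> 1" "0 \<le> u" "0 \<le> v" "u + v = 1"
  hence "u = 1 - v" "v \<le> 1" by auto
  hence "N (u *\<^sub>R x + v *\<^sub>R y) \<le> u * N x + v * N y"
    using N_convex_comb[of v x y] \<open>0 \<le> v\<close> by simp
  also have "\<dots> \<le> u * 1 + v * 1"
    using \<open>N x \<le> 1\<close> \<open>N y \<le> 1\<close> \<open>0 \<le> u\<close> \<open>0 \<le> v\<close> by (intro add_mono mult_left_mono) auto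
  finally show "N (u *\<^sub>R x + v *\<^sub>R y) \<le> 1" using \<open>u + v = 1\<close> by simp
qed

lemma B_0: "0 \<in> unit_ball_of N" by (simp add: unit_ball_of_def)

lemma open_lt1: "open {x. N x < 1}"
  by (intro open_Collect_less continuous_on_const N_cont)

lemma exists_N1: "\<exists>w. N w = 1"
proof -
  obtain e :: 'a where "e \<in> Basis" using nonempty_Basis by blast
  hence "e \<noteq> 0" by auto
  hence "N ((1 / N e) *\<^sub>R e) = 1" using N_pos[of e] by (simp add: N_scale)
  thus ?thesis by blast
qed

lemma dual_bdd: "bdd_above {inner v w | w. N w = 1}"
proof -
  obtain m where m: "m > 0" "\<And>x. m * norm x \<le> N x" using N_lower by blast
  have "inner v w \<le> norm v / m" if "N w = 1" for w
  proof -
    have "norm w \<le> 1 / m" using m(2)[of w] that m(1) by (simp add: field_simps)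
    hence "norm v * norm w \<le> norm v * (1 / m)" by (intro mult_left_mono) auto
    thus ?thesis using norm_cauchy_schwarz[of v w] by simp
  qed
  thus ?thesis by (auto simp: bdd_above_def)
qed

lemma dual_upper: "N w = 1 \<Longrightarrow> inner v w \<le> dual_norm N v"
  unfolding dual_norm_def by (rule cSup_upper[OF _ dual_bdd]) blast

lemma dual_nonneg: "dual_norm N v \<ge> 0"
proof -
  obtain w where w: "N w = 1" using exists_N1 by blast
  have "inner v w \<le> dual_norm N v" using w by (rule dual_upper)
  moreover have "inner v (- w) \<le> dual_norm N v" by (rule dual_upper) (simp add: N_minus w)
  ultimately show ?thesis by simp
qed

lemma dual_le_N: "inner v x \<le> N x * dual_norm N v"
proof (cases "x = 0")
  case True thus ?thesis using dual_nonneg by simp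
next
  case False
  have "N ((1 / N x) *\<^sub>R x) = 1" using N_pos[OF False] by (simp add: N_scale)
  hence "inner v ((1 / N x) *\<^sub>R x) \<le> dual_norm N v" by (rule dual_upper)
  thus ?thesis using N_pos[OF False] by (simp add: field_simps)
qed

lemma dual_ge: "y \<in> unit_ball_of N \<Longrightarrow> inner v y \<le> dual_norm N v"
proof -
  assume "y \<in> unit_ball_of N"
  hence "N y * dual_norm N v \<le> 1 * dual_norm N v"
    using dual_nonneg[of v] by (intro mult_right_mono) (auto simp: unit_ball_of_def)
  thus ?thesis using dual_le_N[of v y] by simp
qed

lemma dual_att: "\<exists>y\<in>unit_ball_of N. inner v y = dual_norm N v"
proof -
  have "unit_ball_of N \<noteq> {}" using B_0 by blast
  moreover have "continuous_on (unit_ball_of N) (inner v)" by (intro continuous_intros)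
  ultimately have "\<exists>y\<in>unit_ball_of N. \<forall>x\<in>unit_ball_of N. inner v x \<le> inner v y"
    by (rule continuous_attains_sup[OF B_compact])
  then obtain y where y: "y \<in> unit_ball_of N" "\<And>x. x \<in> unit_ball_of N \<Longrightarrow> inner v x \<le> inner v y"
    by blast
  have "dual_norm N v \<le> inner v y"
    unfolding dual_norm_def
  proof (rule cSup_least)
    show "{inner v w |w. N w = 1} \<noteq> {}" using exists_N1 by blast
  qed (use y(2) in \<open>auto simp: unit_ball_of_def\<close>)
  hence "inner v y = dual_norm N v" using dual_ge[OF y(1), of v] by linarith
  thus ?thesis using y(1) by blast
qed

lemma dual_eq_max: "z \<in> unit_ball_of N \<Longrightarrow> (\<And>y. y \<in> unit_ball_of N \<Longrightarrow> inner v y \<le> inner v z) \<Longrightarrow> dual_norm N v = inner v z"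
  using dual_att[of v] dual_ge[of z v] by (metis order.antisym)

lemma dual_pos: "v \<noteq> 0 \<Longrightarrow> dual_norm N v > 0"
proof -
  assume v: "v \<noteq> 0"
  have "N ((1 / N v) *\<^sub>R v) = 1" using N_pos[OF v] by (simp add: N_scale)
  hence "inner v ((1 / N v) *\<^sub>R v) \<le> dual_norm N v" by (rule dual_upper)
  moreover have "inner v ((1 / N v) *\<^sub>R v) > 0" using v N_pos[OF v] by simp
  ultimately show ?thesis by linarith
qed

lemma dual_scale: "t \<ge> 0 \<Longrightarrow> dual_norm N (t *\<^sub>R v) = t * dual_norm N v"
proof -
  assume t: "t \<ge> 0"
  obtain y where y: "y \<in> unit_ball_of N" "inner (t *\<^sub>R v) y = dual_norm N (t *\<^sub>R v)" using dual_att by blast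
  obtain y' where y': "y' \<in> unit_ball_of N" "inner v y' = dual_norm N v" using dual_att by blast
  have "dual_norm N (t *\<^sub>R v) \<le> t * dual_norm N v"
    using y dual_ge[OF y(1), of v] t by (metis inner_scaleR_left mult_left_mono)
  moreover have "t * dual_norm N v \<le> dual_norm N (t *\<^sub>R v)"
    using y' dual_ge[OF y'(1), of "t *\<^sub>R v"] by simp
  ultimately show ?thesis by simp
qed

lemma dual_add: "dual_norm N (v + w) \<le> dual_norm N v + dual_norm N w"
proof -
  obtain y where y: "y \<in> unit_ball_of N" "inner (v + w) y = dual_norm N (v + w)" using dual_att by blast
  thus ?thesis using dual_ge[OF y(1), of v] dual_ge[OF y(1), of w] by (simp add: inner_add_left)
qed

lemma max_imp_N1:
  assumes v: "v \<noteq> 0" and z: "z \<in> unit_ball_of N" and mx: "\<And>y. y \<in> unit_ball_of N \<Longrightarrow> inner v y \<le> inner v z"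
  shows "N z = 1"
proof (rule ccontr)
  assume ne: "N z \<noteq> 1"
  hence Nz: "N z < 1" using z by (simp add: unit_ball_of_def)
  have vz: "inner v z = dual_norm N v" using dual_eq_max[OF z mx] by simp
  hence vzp: "inner v z > 0" using dual_pos[OF v] by simp
  hence z0: "z \<noteq> 0" by auto
  have "N ((1 / N z) *\<^sub>R z) = 1" using N_pos[OF z0] by (simp add: N_scale)
  hence "inner v ((1 / N z) *\<^sub>R z) \<le> inner v z" by (intro mx) (simp add: unit_ball_of_def)
  hence "inner v z / N z \<le> inner v z" by simp
  moreover have "inner v z < inner v z / N z" using vzp N_pos[OF z0] Nz by (simp add: field_simps)
  ultimately show False by simp
qed


lemma interior_B: "0 \<in> interior (unit_ball_of N)"
proof (rule interiorI[OF open_lt1])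
  show "0 \<in> {x. N x < 1}" by simp
  show "{x. N x < 1} \<subseteq> unit_ball_of N" unfolding unit_ball_of_def by (simp add: subset_iff)
qed

lemma not_interior_scale:
  fixes S :: "'a set" and c :: 'a
  assumes S: "\<And>x. x \<in> S \<Longrightarrow> P x" and c: "c \<in> interior S"
    and bad: "\<And>t. t > 0 \<Longrightarrow> \<not> P ((1 + t) *\<^sub>R c)"
  shows False
proof -
  obtain e where e: "e > 0" "ball c e \<subseteq> S" using c by (auto simp: mem_interior)
  define t where "t = e / (2 * (norm c + 1))"
  have t: "t > 0" unfolding t_def using e by (intro divide_pos_pos) (auto intro: add_nonneg_pos)
  have "t * norm c < e"
  proof -
    have "t * norm c = (e/2) * (norm c / (norm c + 1))" by (simp add: t_def field_simps)
    also have "\<dots> \<le> (e/2) * 1"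
    proof (rule mult_left_mono)
      have "0 < norm c + 1" using norm_ge_zero[of c] by linarith
      thus "norm c / (norm c + 1) \<le> 1" by (simp add: divide_le_eq_1)
    qed (use e in simp)
    finally show ?thesis using e by simp
  qed
  hence "(1 + t) *\<^sub>R c \<in> ball c e" using t by (simp add: dist_norm algebra_simps)
  hence "P ((1 + t) *\<^sub>R c)" using e S by blast
  thus False using bad[OF t] by blast
qed

lemma bidual:
  assumes a: "a \<noteq> 0"
  shows "\<exists>v. dual_norm N v \<le> 1 \<and> inner a v = N a"
proof -
  define p where "p = (1 / N a) *\<^sub>R a"
  have Np: "N p = 1" using N_pos[OF a] by (simp add: p_def N_scale)
  hence pB: "p \<in> unit_ball_of N" by (simp add: unit_ball_of_def)
  have ri: "rel_interior (unit_ball_of N) = interior (unit_ball_of N)"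
    using interior_B by (intro rel_interior_nonempty_interior) auto
  have "p \<notin> interior (unit_ball_of N)"
  proof
    assume pi: "p \<in> interior (unit_ball_of N)"
    show False
    proof (rule not_interior_scale[where P = "\<lambda>x. N x \<le> 1", OF _ pi])
      fix t :: real assume "t > 0"
      thus "\<not> N ((1 + t) *\<^sub>R p) \<le> 1" using Np by (simp add: N_scale)
    qed (auto simp: unit_ball_of_def)
  qed
  then obtain a' where a': "a' \<noteq> 0" "\<And>y. y \<in> unit_ball_of N \<Longrightarrow> a' \<bullet> p \<le> a' \<bullet> y"
    using supporting_hyperplane_rel_boundary[OF B_convex pB] ri by metis
  define v' where "v' = - a'"
  have v'max: "\<And>y. y \<in> unit_ball_of N \<Longrightarrow> v' \<bullet> y \<le> v' \<bullet> p" using a' by (simp add: v'_def)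
  have Yv': "dual_norm N v' = v' \<bullet> p" using dual_eq_max[OF pB v'max] .
  have Yp: "dual_norm N v' > 0" using dual_pos a' by (simp add: v'_def)
  define v where "v = (1 / dual_norm N v') *\<^sub>R v'"
  have "dual_norm N v = 1" using Yp by (simp add: v_def dual_scale)
  moreover have "inner a v = N a"
  proof -
    have ap: "a = N a *\<^sub>R p" using N_pos[OF a] by (simp add: p_def)
    have "inner a v = inner a v' / dual_norm N v'" by (simp add: v_def)
    also have "inner a v' = N a * (p \<bullet> v')" by (subst ap) simp
    finally have "inner a v = N a * (p \<bullet> v') / dual_norm N v'" .
    thus ?thesis using Yv' Yp by (simp add: inner_commute)
  qed
  ultimately show ?thesis by (intro exI[of _ v]) simp
qed

lemma tight_T:
  assumes tight: "\<forall>c. tight N c" and z: "z \<in> unit_ball_of N" and b: "b \<noteq> 0"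
    and mx: "\<And>y. y \<in> unit_ball_of N \<Longrightarrow> b \<bullet> y \<le> b \<bullet> z"
  shows "\<exists>w\<in>unit_ball_of N. b \<bullet> w = b \<bullet> z \<and> (\<forall>y\<in>unit_ball_of N. w \<bullet> y \<le> w \<bullet> z)"
proof -
  have Nz: "N z = 1" using max_imp_N1[OF b z mx] .
  define r where "r = dual_norm N b"
  have rz: "r = b \<bullet> z" using dual_eq_max[OF z mx] by (simp add: r_def)
  have r0: "r > 0" using dual_pos[OF b] by (simp add: r_def)
  define c where "c = z + b"
  have X2: "is_decomp N norm c z b"
    unfolding is_decomp_def
  proof (intro conjI allI impI)
    fix a' b' assume eq: "c = a' + b'"
    show "N z < N a' \<or> norm b < norm b' \<or> (N a' = N z \<and> norm b' = norm b)"
    proof (cases "N a' \<le> N z")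
      case True
      hence aB: "a' \<in> unit_ball_of N" using Nz by (simp add: unit_ball_of_def)
      have bb: "b' = b + (z - a')" using eq unfolding c_def by (metis add_diff_cancel_left' add.commute diff_add_eq)
      have nb: "(norm b')\<^sup>2 = (norm b)\<^sup>2 + 2 * (b \<bullet> (z - a')) + (norm (z - a'))\<^sup>2"
        unfolding bb by (rule norm_add_sq)
      have "b \<bullet> (z - a') \<ge> 0" using mx[OF aB] by (simp add: inner_diff_right)
      show ?thesis
      proof (cases "a' = z")
        case True 
        hence "b' = b" using bb by simp
        thus ?thesis using True by simp
      next
        case False
        hence "(norm (z - a'))\<^sup>2 > 0" by simp
        hence "(norm b)\<^sup>2 < (norm b')\<^sup>2" using nb \<open>b \<bullet> (z - a') \<ge> 0\<close> by linarith
        hence "norm b < norm b'" by (rule power2_less_imp_less) simp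
        thus ?thesis by simp
      qed
    next
      case False thus ?thesis by simp
    qed
  qed (simp add: c_def)
  hence XY: "is_decomp N (dual_norm N) c z b" using tight by (simp add: tight_def)
  define S where "S = {y + e | y e. y \<in> unit_ball_of N \<and> dual_norm N e \<le> r}"
  have cS: "convex S"
    unfolding convex_def S_def
  proof safe
    fix y1 e1 y2 e2 :: 'a and u v :: real
    assume h: "y1 \<in> unit_ball_of N" "dual_norm N e1 \<le> r" "y2 \<in> unit_ball_of N" "dual_norm N e2 \<le> r"
      "0 \<le> u" "0 \<le> v" "u + v = 1"
    have "u *\<^sub>R y1 + v *\<^sub>R y2 \<in> unit_ball_of N" using B_convex h by (simp add: convex_def)
    moreover have "dual_norm N (u *\<^sub>R e1 + v *\<^sub>R e2) \<le> r"
    proof -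
      have "dual_norm N (u *\<^sub>R e1 + v *\<^sub>R e2) \<le> u * dual_norm N e1 + v * dual_norm N e2"
        using dual_add[of "u *\<^sub>R e1" "v *\<^sub>R e2"] h by (simp add: dual_scale)
      also have "\<dots> \<le> u * r + v * r" using h by (intro add_mono mult_left_mono) auto
      also have "\<dots> = (u + v) * r" by (simp add: distrib_right)
      finally show ?thesis using h(7) by simp
    qed
    moreover have "u *\<^sub>R (y1 + e1) + v *\<^sub>R (y2 + e2) = (u *\<^sub>R y1 + v *\<^sub>R y2) + (u *\<^sub>R e1 + v *\<^sub>R e2)"
      by (simp add: algebra_simps)
    ultimately show "\<exists>y e. u *\<^sub>R (y1 + e1) + v *\<^sub>R (y2 + e2) = y + e \<and> y \<in> unit_ball_of N \<and> dual_norm N e \<le> r"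
      by blast
  qed
  have Sin: "y + e \<in> S" if "y \<in> unit_ball_of N" "dual_norm N e \<le> r" for y e
    unfolding S_def using that by blast
  have cinS: "c \<in> S" unfolding c_def by (rule Sin[OF z]) (simp add: r_def)
  have bint: "b \<in> interior S"
  proof (rule interiorI)
    have "continuous_on UNIV (\<lambda>x. N (x - b))"
      by (rule continuous_on_compose2[OF N_cont]) (auto intro: continuous_intros)
    thus "open {x. N (x - b) < 1}" by (intro open_Collect_less continuous_on_const)
    show "b \<in> {x. N (x - b) < 1}" by simp
    show "{x. N (x - b) < 1} \<subseteq> S"
    proof
      fix x assume "x \<in> {x. N (x - b) < 1}"
      hence "x - b \<in> unit_ball_of N" by (simp add: unit_ball_of_def)
      moreover have "x = (x - b) + b" by simp
      ultimately show "x \<in> S" using Sin[of "x - b" b] by (simp add: r_def)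
    qed
  qed
  have ri: "rel_interior S = interior S" using bint by (intro rel_interior_nonempty_interior) auto
  have "c \<notin> interior S"
  proof
    assume ci: "c \<in> interior S"
    show False
    proof (rule not_interior_scale[where P = "\<lambda>x. x \<in> S", OF _ ci])
      fix t :: real assume t: "t > 0"
      show "(1 + t) *\<^sub>R c \<notin> S"
      proof
        assume "(1 + t) *\<^sub>R c \<in> S"
        then obtain y e where ye: "(1 + t) *\<^sub>R c = y + e" "y \<in> unit_ball_of N" "dual_norm N e \<le> r"
          by (auto simp: S_def)
        define a' where "a' = (1 / (1 + t)) *\<^sub>R y"
        define b' where "b' = (1 / (1 + t)) *\<^sub>R e"
        have "c = (1 / (1 + t)) *\<^sub>R ((1 + t) *\<^sub>R c)" using t by simp
        also have "\<dots> = a' + b'" unfolding ye(1) by (simp add: a'_def b'_def scaleR_add_right)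
        finally have "c = a' + b'" .
        hence "N z < N a' \<or> dual_norm N b < dual_norm N b' \<or> (N a' = N z \<and> dual_norm N b' = dual_norm N b)"
          using XY by (simp add: is_decomp_def)
        moreover have "N a' < 1"
        proof -
          have "N a' = N y / (1 + t)" using t by (simp add: a'_def N_scale)
          also have "\<dots> \<le> 1 / (1 + t)" using ye(2) t by (intro divide_right_mono) (auto simp: unit_ball_of_def)
          also have "\<dots> < 1" using t by simp
          finally show ?thesis .
        qed
        moreover have "dual_norm N b' \<le> r"
        proof -
          have "dual_norm N b' = dual_norm N e / (1 + t)" using t by (simp add: b'_def dual_scale)
          also have "\<dots> \<le> r / (1 + t)" using ye(3) t by (intro divide_right_mono) auto
          also have "\<dots> \<le> r" using t r0 by (simp add: field_simps)
          finally show ?thesis .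
        qed
        ultimately show False using Nz by (simp add: r_def)
      qed
    qed (auto)
  qed
  then obtain a where a: "a \<noteq> 0" "\<And>s. s \<in> S \<Longrightarrow> a \<bullet> c \<le> a \<bullet> s"
    using supporting_hyperplane_rel_boundary[OF cS cinS] ri by metis
  define w0 where "w0 = - a"
  have w0ne: "w0 \<noteq> 0" using a by (simp add: w0_def)
  have w0y: "w0 \<bullet> y \<le> w0 \<bullet> z" if "y \<in> unit_ball_of N" for y
  proof -
    have "y + b \<in> S" using that by (intro Sin) (auto simp: r_def)
    hence "a \<bullet> c \<le> a \<bullet> (y + b)" by (rule a(2))
    thus ?thesis by (simp add: w0_def c_def inner_add_right)
  qed
  have w0e: "w0 \<bullet> e \<le> w0 \<bullet> b" if "dual_norm N e \<le> r" for e
  proof -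
    have "z + e \<in> S" using that z by (intro Sin)
    hence "a \<bullet> c \<le> a \<bullet> (z + e)" by (rule a(2))
    thus ?thesis by (simp add: w0_def c_def inner_add_right)
  qed
  obtain v where v: "dual_norm N v \<le> 1" "inner w0 v = N w0" using bidual[OF w0ne] by blast
  have "dual_norm N (r *\<^sub>R v) \<le> r" using v r0 by (simp add: dual_scale mult_left_le)
  hence "w0 \<bullet> (r *\<^sub>R v) \<le> w0 \<bullet> b" by (rule w0e)
  hence rN: "r * N w0 \<le> w0 \<bullet> b" using v by simp
  have Nw0: "N w0 > 0" using N_pos[OF w0ne] .
  define w where "w = (1 / N w0) *\<^sub>R w0"
  have Nw: "N w = 1" using Nw0 by (simp add: w_def N_scale)
  hence wB: "w \<in> unit_ball_of N" by (simp add: unit_ball_of_def)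
  have "b \<bullet> w \<ge> r"
  proof -
    have "b \<bullet> w = (w0 \<bullet> b) / N w0" by (simp add: w_def inner_commute)
    hence "N w0 * r \<le> N w0 * (b \<bullet> w)" using rN Nw0 by (simp add: field_simps mult.commute)
    thus ?thesis using Nw0 by (simp add: mult_le_cancel_left_pos)
  qed
  hence "b \<bullet> w = b \<bullet> z" using mx[OF wB] rz by simp
  moreover have "\<forall>y\<in>unit_ball_of N. w \<bullet> y \<le> w \<bullet> z"
  proof
    fix y assume "y \<in> unit_ball_of N"
    hence "w0 \<bullet> y / N w0 \<le> w0 \<bullet> z / N w0" using w0y Nw0 by (intro divide_right_mono) auto
    thus "w \<bullet> y \<le> w \<bullet> z" by (simp add: w_def)
  qed
  ultimately show ?thesis using wB by blast
qed


lemma dual_0: "dual_norm N 0 = 0" using dual_scale[of 0 0] by simp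

lemma is_face_face_of:
  assumes F: "is_face N F"
  shows "F face_of unit_ball_of N"
  unfolding face_of_def
proof (intro conjI)
  show "F \<subseteq> unit_ball_of N" "convex F" using F by (auto simp: is_face_def)
  show "\<forall>a\<in>unit_ball_of N. \<forall>b\<in>unit_ball_of N. \<forall>x\<in>F. x \<in> open_segment a b \<longrightarrow> a \<in> F \<and> b \<in> F"
  proof (intro ballI impI)
    fix a b x assume ab: "a \<in> unit_ball_of N" "b \<in> unit_ball_of N" and x: "x \<in> F" "x \<in> open_segment a b"
    then obtain u where u: "0 < u" "u < 1" "x = (1 - u) *\<^sub>R a + u *\<^sub>R b" by (auto simp: in_segment)
    have "(1 - u) *\<^sub>R a + (1 - (1 - u)) *\<^sub>R b \<in> F" using u x by simp
    moreover have "0 < 1 - u" "1 - u < 1" using u by auto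
    ultimately show "a \<in> F \<and> b \<in> F" using F ab unfolding is_face_def by blast
  qed
qed

lemma exposed_is_face:
  assumes mx: "\<And>y. y \<in> unit_ball_of N \<Longrightarrow> b \<bullet> y \<le> m"
  shows "is_face N {y\<in>unit_ball_of N. b \<bullet> y = m}"
proof -
  have cl: "closed {y \<in> unit_ball_of N. b \<bullet> y = m}"
    using closed_Int[OF B_closed closed_hyperplane[of b m]] by (simp add: Int_def)
  have cv: "convex {y \<in> unit_ball_of N. b \<bullet> y = m}"
    using convex_Int[OF B_convex convex_hyperplane[of b m]] by (simp add: Int_def)
  have ex: "u \<in> {y \<in> unit_ball_of N. b \<bullet> y = m} \<and> w \<in> {y \<in> unit_ball_of N. b \<bullet> y = m}"
    if uw: "u \<in> unit_ball_of N" "w \<in> unit_ball_of N"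
    and h: "0 < t \<and> t < 1 \<and> t *\<^sub>R u + (1 - t) *\<^sub>R w \<in> {y \<in> unit_ball_of N. b \<bullet> y = m}" for u w t
  proof -
  have eq: "t * (b \<bullet> u) + (1 - t) * (b \<bullet> w) = m" using h by (simp add: inner_add_right)
  have bu: "b \<bullet> u \<le> m" "b \<bullet> w \<le> m" using mx uw by auto
  have "b \<bullet> u = m"
  proof (rule ccontr)
    assume "b \<bullet> u \<noteq> m"
    hence "b \<bullet> u < m" using bu by simp
    hence "t * (b \<bullet> u) < t * m" using h by simp
    moreover have "(1 - t) * (b \<bullet> w) \<le> (1 - t) * m" using h bu by (intro mult_left_mono) auto
    ultimately show False using eq by (simp add: algebra_simps)
  qed
  moreover have "b \<bullet> w = m"
  proof (rule ccontr)
    assume "b \<bullet> w \<noteq> m"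
    hence "b \<bullet> w < m" using bu by simp
    hence "(1 - t) * (b \<bullet> w) < (1 - t) * m" using h by simp
    moreover have "t * (b \<bullet> u) \<le> t * m" using h bu by (intro mult_left_mono) auto
    ultimately show False using eq by (simp add: algebra_simps)
  qed
  ultimately show ?thesis using uw by auto
  qed
  show ?thesis unfolding is_face_def using cl cv ex by blast
qed

lemma face_not0:
  assumes F: "F face_of unit_ball_of N" "F \<noteq> unit_ball_of N"
  shows "0 \<notin> F"
proof
  assume z: "0 \<in> F"
  have "unit_ball_of N \<subseteq> F"
  proof
    fix y assume y: "y \<in> unit_ball_of N"
    show "y \<in> F"
    proof (cases "y = 0")
      case True thus ?thesis using z by simp
    next
      case False
      have my: "- y \<in> unit_ball_of N" using y by (simp add: unit_ball_of_def N_minus)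
      have yy: "y \<noteq> - y"
      proof
        assume "y = - y"
        hence "y + y = 0" by (metis add.right_inverse)
        hence "2 *\<^sub>R y = 0" by (simp add: scaleR_2)
        thus False using False by simp
      qed
      have "0 = (1 - 1/2) *\<^sub>R y + (1/2::real) *\<^sub>R (- y)" by simp
      hence "0 \<in> open_segment y (- y)" using yy unfolding in_segment by (intro conjI exI[of _ "1/2"]) auto
      thus ?thesis using F(1) y my z unfolding face_of_def by blast
    qed
  qed
  thus False using F face_of_imp_subset by blast
qed

lemma face_N1:
  assumes F: "F face_of unit_ball_of N" "F \<noteq> unit_ball_of N" and x: "x \<in> F"
  shows "N x = 1"
proof (rule ccontr)
  assume ne: "N x \<noteq> 1"
  have xB: "x \<in> unit_ball_of N" using x face_of_imp_subset[OF F(1)] by blast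
  hence lt: "N x < 1" using ne by (simp add: unit_ball_of_def)
  have x0: "x \<noteq> 0" using face_not0[OF F] x by blast
  define y where "y = (1 / N x) *\<^sub>R x"
  have yB: "y \<in> unit_ball_of N" using N_pos[OF x0] by (simp add: y_def unit_ball_of_def N_scale)
  have y0: "y \<noteq> 0" using x0 N_pos[OF x0] by (simp add: y_def)
  have "x = (1 - N x) *\<^sub>R 0 + N x *\<^sub>R y" using N_pos[OF x0] by (simp add: y_def)
  hence "x \<in> open_segment 0 y" using y0 lt N_pos[OF x0] by (auto simp: in_segment)
  hence "0 \<in> F" using F(1) B_0 yB x unfolding face_of_def by blast
  thus False using face_not0[OF F] by blast
qed

lemma small_le:
  fixes x c :: real
  assumes "\<And>n::nat. x \<le> c / (real n + 1)" "c \<ge> 0"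
  shows "x \<le> 0"
proof (rule ccontr)
  assume "\<not> x \<le> 0"
  hence x: "x > 0" by simp
  obtain n :: nat where n: "c / x < real n" using reals_Archimedean2 by blast
  have "c < x * real n" using n x by (simp add: field_simps)
  also have "\<dots> \<le> x * (real n + 1)" using x by simp
  finally have "c / (real n + 1) < x" by (simp add: field_simps)
  thus False using assms(1)[of n] by simp
qed

lemma faces_imp_tight:
  assumes H: "\<forall>F. is_face N F \<and> F \<noteq> {} \<and> F \<noteq> unit_ball_of N \<longrightarrow>
       (\<exists>u\<in>F. unitangent N u \<and> (\<forall>v\<in>F. \<forall>w\<in>F. inner u (v - w) = 0))"
  shows "tight N c"
  unfolding tight_def
proof (intro allI impI)
  fix a b assume X2: "is_decomp N norm c a b"
  have cab: "c = a + b" using X2 by (simp add: is_decomp_def)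
  have opt: "\<And>a' b'. c = a' + b' \<Longrightarrow> N a < N a' \<or> norm b < norm b' \<or> (N a' = N a \<and> norm b' = norm b)"
    using X2 by (simp add: is_decomp_def)
  show "is_decomp N (dual_norm N) c a b"
    unfolding is_decomp_def
  proof (intro conjI allI impI)
    show "c = a + b" by fact
  next
    fix a' b' assume eq: "c = a' + b'"
    show "N a < N a' \<or> dual_norm N b < dual_norm N b' \<or> (N a' = N a \<and> dual_norm N b' = dual_norm N b)"
    proof (cases "a = 0")
      case True
      show ?thesis
      proof (cases "a' = 0")
        case True thus ?thesis using \<open>a = 0\<close> eq cab by simp
      next
        case False thus ?thesis using \<open>a = 0\<close> N_pos by simp
      qed
    next
      case a0: False
      show ?thesis
      proof (cases "b = 0")
        case True
        show ?thesis
        proof (cases "b' = 0")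
          case True thus ?thesis using \<open>b = 0\<close> eq cab by simp
        next
          case False
          have "dual_norm N b < dual_norm N b'" using dual_pos[OF False] \<open>b = 0\<close> dual_0 by simp
          thus ?thesis by simp
        qed
      next
        case b0: False
        define t where "t = N a"
        have t0: "t > 0" using N_pos[OF a0] by (simp add: t_def)
        have var: "b \<bullet> y \<le> b \<bullet> a" if y: "N y \<le> t" for y
        proof -
          have "b \<bullet> (y - a) \<le> 0"
          proof (rule real_le_small[where C = "(norm (y - a))\<^sup>2 / 2"])
            fix s :: real assume s: "0 < s" "s \<le> 1"
            define ys where "ys = (1 - s) *\<^sub>R a + s *\<^sub>R y"
            have "N ys \<le> (1 - s) * N a + s * N y" unfolding ys_def using s by (intro N_convex_comb) auto
            also have "\<dots> \<le> (1 - s) * t + s * t" using s y by (intro add_mono mult_left_mono) (auto simp: t_def)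
            finally have "N ys \<le> N a" by (simp add: t_def algebra_simps)
            hence "norm b < norm (c - ys) \<or> norm (c - ys) = norm b" using opt[of ys "c - ys"] by auto
            hence "norm b \<le> norm (c - ys)" by auto
            hence sq: "(norm b)\<^sup>2 \<le> (norm (c - ys))\<^sup>2" by (simp add: power_mono)
            have ceq: "c - ys = b + (- s) *\<^sub>R (y - a)" by (simp add: cab ys_def algebra_simps)
            have "(norm (c - ys))\<^sup>2 = (norm b)\<^sup>2 + 2 * (b \<bullet> ((- s) *\<^sub>R (y - a))) + (norm ((- s) *\<^sub>R (y - a)))\<^sup>2"
              unfolding ceq by (rule norm_add_sq)
            also have "\<dots> = (norm b)\<^sup>2 - 2 * s * (b \<bullet> (y - a)) + s\<^sup>2 * (norm (y - a))\<^sup>2"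
              using s by (simp add: power_mult_distrib)
            finally have "2 * s * (b \<bullet> (y - a)) \<le> s\<^sup>2 * (norm (y - a))\<^sup>2" using sq by linarith
            hence "s * (2 * (b \<bullet> (y - a))) \<le> s * (s * (norm (y - a))\<^sup>2)" by (simp add: power2_eq_square algebra_simps)
            hence "2 * (b \<bullet> (y - a)) \<le> s * (norm (y - a))\<^sup>2" using s by simp
            thus "b \<bullet> (y - a) \<le> s * ((norm (y - a))\<^sup>2 / 2)" by simp
          qed simp
          thus ?thesis by (simp add: inner_diff_right)
        qed
        define p where "p = (1 / t) *\<^sub>R a"
        have Np: "N p = 1" using t0 by (simp add: p_def N_scale t_def)
        hence pB: "p \<in> unit_ball_of N" by (simp add: unit_ball_of_def)
        have pmax: "b \<bullet> y \<le> b \<bullet> p" if "y \<in> unit_ball_of N" for y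
        proof -
          have "N (t *\<^sub>R y) \<le> t" using that t0 by (simp add: N_scale unit_ball_of_def)
          hence "b \<bullet> (t *\<^sub>R y) \<le> b \<bullet> a" by (rule var)
          hence "t * (b \<bullet> y) \<le> t * (b \<bullet> p)" using t0 by (simp add: p_def)
          thus ?thesis using t0 by simp
        qed
        have Yb: "dual_norm N b = b \<bullet> p" using dual_eq_max[OF pB pmax] .
        define F where "F = {y\<in>unit_ball_of N. b \<bullet> y = b \<bullet> p}"
        have Ff: "is_face N F" unfolding F_def by (rule exposed_is_face) (use pmax in auto)
        have pF: "p \<in> F" using pB by (simp add: F_def)
        have "0 \<notin> F" using dual_pos[OF b0] Yb by (auto simp: F_def)
        hence FB: "F \<noteq> unit_ball_of N" using B_0 by blast
        obtain u where u: "u \<in> F" "unitangent N u" "\<And>v w. v \<in> F \<Longrightarrow> w \<in> F \<Longrightarrow> inner u (v - w) = 0"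
          using H Ff pF FB by blast
        have uB: "u \<in> unit_ball_of N" and bu: "b \<bullet> u = b \<bullet> p" using u(1) by (auto simp: F_def)
        have Nu: "N u = 1" using max_imp_N1[OF b0 uB] pmax bu by simp
        have u0: "u \<noteq> 0" using Nu by auto
        have Yu: "(norm u)\<^sup>2 = dual_norm N u" using u(2) Nu by (simp add: unitangent_def)
        have "inner u (p - u) = 0" using u(3)[OF pF u(1)] .
        hence "u \<bullet> p = dual_norm N u" using Yu by (simp add: inner_diff_right power2_norm_eq_inner)
        hence "u \<bullet> a / t = dual_norm N u" using t0 by (simp add: p_def)
        hence ua: "u \<bullet> a = t * dual_norm N u" using t0 by (simp add: field_simps)
        have Yup: "dual_norm N u > 0" using dual_pos[OF u0] .
        have "b' \<bullet> u \<le> dual_norm N b'" using dual_le_N[of b' u] Nu by simp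
        moreover have "u \<bullet> a' \<le> N a' * dual_norm N u" by (rule dual_le_N)
        moreover have "c \<bullet> u = t * dual_norm N u + dual_norm N b"
          using ua Yb bu by (simp add: cab inner_add_left inner_commute[of a u] inner_commute[of b u])
        moreover have "c \<bullet> u = a' \<bullet> u + b' \<bullet> u" by (simp add: eq inner_add_left)
        ultimately have key: "dual_norm N b + (t - N a') * dual_norm N u \<le> dual_norm N b'"
          by (simp add: inner_commute algebra_simps)
        show ?thesis
        proof (cases "N a' < t")
          case True
          hence "0 < (t - N a') * dual_norm N u" using Yup by simp
          thus ?thesis using key by (simp add: t_def)
        next
          case False
          show ?thesis
          proof (cases "N a' = t")
            case True
            hence "dual_norm N b \<le> dual_norm N b'" using key by simp
            thus ?thesis using True by (auto simp: t_def)
          next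
            case False
            thus ?thesis using \<open>\<not> N a' < t\<close> by (simp add: t_def)
          qed
        qed
      qed
    qed
  qed
qed


lemma tight_imp_faces:
  assumes tight: "\<forall>c. tight N c" and Ff: "is_face N F" and Fne: "F \<noteq> {}" and FB: "F \<noteq> unit_ball_of N"
  shows "\<exists>u\<in>F. unitangent N u \<and> (\<forall>v\<in>F. \<forall>w\<in>F. inner u (v - w) = 0)"
proof -
  have Ffo: "F face_of unit_ball_of N" using is_face_face_of[OF Ff] .
  have Fsub: "F \<subseteq> unit_ball_of N" using face_of_imp_subset[OF Ffo] .
  have Fcl: "closed F" using face_of_imp_closed[OF B_convex B_closed Ffo] .
  have cF: "convex F" using face_of_imp_convex[OF Ffo] .
  obtain u0 where u0: "u0 \<in> rel_interior F" using rel_interior_eq_empty[OF cF] Fne by blast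
  have u0F: "u0 \<in> F" using u0 rel_interior_subset by blast
  have u0B: "u0 \<in> unit_ball_of N" using u0F Fsub by blast
  obtain M0 where M0: "\<And>y. y \<in> unit_ball_of N \<Longrightarrow> norm y \<le> M0"
    using B_bounded by (auto simp: bounded_iff)
  define M where "M = max M0 0"
  have M: "\<And>y. y \<in> unit_ball_of N \<Longrightarrow> norm y \<le> M" "M \<ge> 0"
    using M0 by (auto simp: M_def intro: order_trans[OF _ max.cobounded1])
  obtain y0 where y0: "y0 \<in> unit_ball_of N" "y0 \<notin> F" using Fsub FB by blast
  define \<rho> where "\<rho> = infdist y0 F"
  have \<rho>: "\<rho> > 0"
  proof -
    have "\<rho> \<noteq> 0" using in_closed_iff_infdist_zero[OF Fcl Fne, of y0] y0 by (simp add: \<rho>_def)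
    thus ?thesis using infdist_nonneg[of y0 F] by (simp add: \<rho>_def)
  qed
  define \<delta> where "\<delta> n = \<rho> / (real n + 1)" for n :: nat
  have \<delta>0: "\<delta> n > 0" for n using \<rho> by (simp add: \<delta>_def)
  have \<delta>le: "\<delta> n \<le> \<rho>" for n using \<rho> by (simp add: \<delta>_def divide_le_eq)
  have \<delta>mono: "\<delta> n \<le> \<delta> m" if "m \<le> n" for m n
    using \<rho> that by (simp add: \<delta>_def frac_le)
  define A where "A n = {w\<in>unit_ball_of N. infdist w F \<le> \<delta> n \<and> (\<forall>y\<in>unit_ball_of N. w \<bullet> y \<le> w \<bullet> u0 + M * \<delta> n)}" for n
  have Aeq: "A n = unit_ball_of N \<inter> {w. infdist w F \<le> \<delta> n} \<inter> (\<Inter>y\<in>unit_ball_of N. {w. w \<bullet> y \<le> w \<bullet> u0 + M * \<delta> n})" for n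
    by (auto simp: A_def)
  have Acomp: "compact (A n)" for n
  proof -
    have c1: "closed {w. infdist w F \<le> \<delta> n}"
      by (intro closed_Collect_le continuous_on_const continuous_on_infdist continuous_on_id)
    have c2: "closed (\<Inter>y\<in>unit_ball_of N. {w. w \<bullet> y \<le> w \<bullet> u0 + M * \<delta> n})"
      by (intro closed_INT ballI closed_Collect_le continuous_intros)
    show ?thesis unfolding Aeq
      by (intro compact_Int_closed closed_Int c1 c2 B_compact)
  qed
  have Ane: "A n \<noteq> {}" for n
  proof -
    obtain b z where bz: "z \<in> unit_ball_of N" "\<forall>y\<in>unit_ball_of N. b \<bullet> y \<le> b \<bullet> z" "dist z u0 < \<delta> n"
      "\<And>g. g \<in> unit_ball_of N \<Longrightarrow> b \<bullet> g = b \<bullet> z \<Longrightarrow> infdist g F < \<delta> n"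
      using lex_lemma[OF B_compact B_convex Ffo u0F \<delta>0[of n]] by blast
    have b0: "b \<noteq> 0"
    proof
      assume "b = 0"
      hence "infdist y0 F < \<delta> n" using bz(4)[OF y0(1)] by simp
      thus False using \<delta>le[of n] by (simp add: \<rho>_def)
    qed
    obtain w where w: "w \<in> unit_ball_of N" "b \<bullet> w = b \<bullet> z" "\<forall>y\<in>unit_ball_of N. w \<bullet> y \<le> w \<bullet> z"
      using tight_T[OF tight bz(1) b0] bz(2) by blast
    have "infdist w F \<le> \<delta> n" using bz(4)[OF w(1,2)] by simp
    moreover have "w \<bullet> y \<le> w \<bullet> u0 + M * \<delta> n" if "y \<in> unit_ball_of N" for y
    proof -
      have "w \<bullet> (z - u0) \<le> norm w * norm (z - u0)" by (rule norm_cauchy_schwarz)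
      also have "\<dots> \<le> M * \<delta> n"
        using M w(1) bz(3) by (intro mult_mono) (auto simp: dist_norm)
      finally have "w \<bullet> z - w \<bullet> u0 \<le> M * \<delta> n" by (simp add: inner_diff_right)
      moreover have "w \<bullet> y \<le> w \<bullet> z" using w(3) that by blast
      ultimately show ?thesis by linarith
    qed
    ultimately have "w \<in> A n" using w(1) by (simp add: A_def)
    thus ?thesis by blast
  qed
  have Amono: "A n \<subseteq> A m" if "m \<le> n" for m n
  proof -
    have "M * \<delta> n \<le> M * \<delta> m" using \<delta>mono[OF that] M(2) by (intro mult_left_mono) auto
    thus ?thesis using \<delta>mono[OF that] unfolding A_def by (auto intro: order_trans)
  qed
  obtain w where w: "w \<in> \<Inter>(range A)" using compact_nest[of A, OF Acomp Ane Amono] by blast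
  have wB: "w \<in> unit_ball_of N" using w by (auto simp: A_def)
  have "infdist w F \<le> 0"
    by (rule small_le[of _ \<rho>]) (use w \<rho> in \<open>auto simp: A_def \<delta>_def\<close>)
  hence "infdist w F = 0" using infdist_nonneg[of w F] by simp
  hence wF: "w \<in> F" using in_closed_iff_infdist_zero[OF Fcl Fne] by simp
  have wmax: "w \<bullet> y \<le> w \<bullet> u0" if y: "y \<in> unit_ball_of N" for y
  proof -
    have "w \<bullet> y - w \<bullet> u0 \<le> 0"
    proof (rule small_le[of _ "M * \<rho>"])
      fix n :: nat
      have "w \<in> A n" using w by blast
      hence "w \<bullet> y \<le> w \<bullet> u0 + M * \<delta> n" using y by (simp add: A_def)
      thus "w \<bullet> y - w \<bullet> u0 \<le> M * \<rho> / (real n + 1)" by (simp add: \<delta>_def)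
    qed (use M \<rho> in simp)
    thus ?thesis by simp
  qed
  define G where "G = unit_ball_of N \<inter> {x. w \<bullet> x = w \<bullet> u0}"
  have Gf: "G face_of unit_ball_of N" unfolding G_def
    by (rule face_of_Int_supporting_hyperplane_le[OF B_convex]) (use wmax in auto)
  have FG: "F \<subseteq> G" by (rule subset_of_face_of[OF Gf Fsub]) (use u0 u0B in \<open>auto simp: G_def\<close>)
  have wv: "w \<bullet> v = w \<bullet> u0" if "v \<in> F" for v using FG that by (auto simp: G_def)
  have Nw: "N w = 1" using face_N1[OF Ffo FB wF] .
  have Yw: "dual_norm N w = w \<bullet> u0" using dual_eq_max[OF u0B wmax] .
  have "unitangent N w"
    unfolding unitangent_def using Yw wv[OF wF] Nw by (simp add: power2_norm_eq_inner)
  moreover have "\<forall>v\<in>F. \<forall>v'\<in>F. inner w (v - v') = 0" using wv by (simp add: inner_diff_right)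
  ultimately show ?thesis using wF by blast
qed

end

theorem mainTheorem15:
  fixes N :: "'a::euclidean_space \<Rightarrow> real"
  assumes "is_norm N"
  shows "(\<forall>c. tight N c) \<longleftrightarrow>
    (\<forall>F. is_face N F \<and> F \<noteq> {} \<and> F \<noteq> unit_ball_of N \<longrightarrow>
       (\<exists>u\<in>F. unitangent N u \<and> (\<forall>v\<in>F. \<forall>w\<in>F. inner u (v - w) = 0)))"
proof
  assume T: "\<forall>c. tight N c"
  show "\<forall>F. is_face N F \<and> F \<noteq> {} \<and> F \<noteq> unit_ball_of N \<longrightarrow>
       (\<exists>u\<in>F. unitangent N u \<and> (\<forall>v\<in>F. \<forall>w\<in>F. inner u (v - w) = 0))"
  proof (intro allI impI)
    fix F assume "is_face N F \<and> F \<noteq> {} \<and> F \<noteq> unit_ball_of N"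
    thus "\<exists>u\<in>F. unitangent N u \<and> (\<forall>v\<in>F. \<forall>w\<in>F. inner u (v - w) = 0)"
      using tight_imp_faces[OF assms T] by simp
  qed
next
  assume H: "\<forall>F. is_face N F \<and> F \<noteq> {} \<and> F \<noteq> unit_ball_of N \<longrightarrow>
       (\<exists>u\<in>F. unitangent N u \<and> (\<forall>v\<in>F. \<forall>w\<in>F. inner u (v - w) = 0))"
  show "\<forall>c. tight N c" using faces_imp_tight[OF assms H] by simp
qed

end
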